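(* Let $W$ be a workload matrix and $A$ a strategy matrix with the same number of columns, with $W=WA^+A$ (i.e. every row of $W$ lies in the row space of $A$). Let $C$ be any matrix with the same number of columns and let $\tilde A=\begin{bmatrix}A\\ C\end{bmatrix}$. Then $\|W\tilde A^+\|_F\le\|WA^+\|_F$.
   Context: $M^+$ denotes the Moore–Penrose pseudo-inverse of $M$ and $\|\cdot\|_F$ the Frobenius norm. In the matrix-mechanism framework a strategy $A$ for a workload $W$ is one from which $W$ can be answered, i.e. $W=WA^+A$. *)

theory Defs
  imports "HOL-Analysis.Analysis"
begin

definition pinv :: "real^'n^'m \<Rightarrow> real^'m^'n" where
  "pinv M = (THE X. M ** X ** M = M \<and> X ** M ** X = X \<and>
                    transpose (M ** X) = M ** X \<and> transpose (X ** M) = X ** M)"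

definition frob_norm :: "real^'n^'m \<Rightarrow> real" where
  "frob_norm M = sqrt (\<Sum>i\<in>UNIV. \<Sum>j\<in>UNIV. (M $ i $ j)^2)"

definition stack :: "real^'n^'m \<Rightarrow> real^'n^'k \<Rightarrow> real^'n^('m + 'k)" where
  "stack A C = (\<chi> i. case i of Inl j \<Rightarrow> A $ j | Inr j \<Rightarrow> C $ j)"

end

theory Submission
  imports Defs
begin

lemma proj_exists:
  fixes S :: "(real^'n) set"
  assumes "subspace S"
  obtains p where "linear p" "\<And>x. p x \<in> S" "\<And>x. x \<in> S \<Longrightarrow> p x = x"
    "\<And>x y. inner (p x) y = inner x (p y)"
proof -
  obtain T where T: "0 \<notin> T" "T \<subseteq> S" "pairwise orthogonal T" "independent T" "span T = S"
    using orthogonal_basis_subspace[OF assms] by metis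
  have fin: "finite T" using T(4) independent_imp_finite by blast
  define p where "p x = (\<Sum>b\<in>T. (b \<bullet> x / (b \<bullet> b)) *\<^sub>R b)" for x :: "real^'n"
  have lin: "linear p"
  proof (rule linearI)
    fix x y show "p (x + y) = p x + p y"
      by (simp add: p_def inner_add_right add_divide_distrib scaleR_add_left sum.distrib)
  next
    fix c :: real and x show "p (c *\<^sub>R x) = c *\<^sub>R p x"
      by (simp add: p_def scaleR_sum_right)
  qed
  have inS: "p x \<in> S" for x
    unfolding p_def using T(5) by (simp add: span_base span_mul span_sum flip: T(5))
  have orth: "orthogonal w (x - p x)" if "w \<in> S" for w x
    unfolding p_def using Gram_Schmidt_step[OF T(3), of w x] T(5) that by simp
  have fixp: "p x = x" if "x \<in> S" for x
  proof -
    have "x - p x \<in> S" using that inS assms subspace_diff by blast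
    then have "orthogonal (x - p x) (x - p x)" using orth by blast
    then show ?thesis by (simp add: orthogonal_self)
  qed
  have sa: "inner (p x) y = inner x (p y)" for x y
    unfolding p_def inner_sum_left inner_sum_right
    by (rule sum.cong) (simp_all add: inner_commute)
  show ?thesis using that lin inS fixp sa by blast
qed

lemma sym_matrix:
  fixes B :: "real^'n^'n"
  assumes "\<And>x y. inner (B *v x) y = inner x (B *v y)"
  shows "transpose B = B"
proof -
  have "adjoint (\<lambda>x. B *v x) = (\<lambda>x. B *v x)"
    using assms by (intro adjoint_unique) auto
  then have "(\<lambda>x. transpose B *v x) = (\<lambda>x. B *v x)"
    by (simp add: adjoint_matrix)
  then show ?thesis by (metis matrix_eq)
qed

definition penrose :: "real^'n^'m \<Rightarrow> real^'m^'n \<Rightarrow> bool" where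
  "penrose M X \<longleftrightarrow> M ** X ** M = M \<and> X ** M ** X = X \<and>
                    transpose (M ** X) = M ** X \<and> transpose (X ** M) = X ** M"

lemma penrose_exists:
  fixes M :: "real^'n^'m"
  shows "\<exists>X. penrose M X"
proof -
  have sR: "subspace (range (\<lambda>x. M *v x))"
    by (intro linear_subspace_image subspace_UNIV) simp
  obtain pR where pR: "linear pR" "\<And>x. pR x \<in> range (\<lambda>x. M *v x)"
     "\<And>x. x \<in> range (\<lambda>x. M *v x) \<Longrightarrow> pR x = x" "\<And>x y. inner (pR x) y = inner x (pR y)"
    using proj_exists[OF sR] by blast
  have sK: "subspace {x. M *v x = 0}"
    by (rule linear_subspace_kernel) simp
  obtain pK where pK: "linear pK" "\<And>x. pK x \<in> {x. M *v x = 0}"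
     "\<And>x. x \<in> {x. M *v x = 0} \<Longrightarrow> pK x = x" "\<And>x y. inner (pK x) y = inner x (pK y)"
    using proj_exists[OF sK] by blast
  define q where "q x = x - pK x" for x
  have qlin: "linear q" unfolding q_def[abs_def]
    by (intro linear_compose_sub linear_id[unfolded id_def] pK(1))
  have qeq: "q x = q x'" if "M *v x = M *v x'" for x x'
  proof -
    have "M *v (x - x') = 0" using that by (simp add: matrix_vector_mult_diff_distrib)
    then have "pK (x - x') = x - x'" using pK(3) by blast
    then show ?thesis using linear_diff[OF pK(1)] unfolding q_def by (simp add: algebra_simps)
  qed
  have Mq: "M *v q x = M *v x" for x
    using pK(2)[of x] by (simp add: q_def matrix_vector_mult_diff_distrib)
  have ex: "\<exists>x. M *v x = pR y" for y using pR(2)[of y] by auto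
  define g where "g y = q (SOME x. M *v x = pR y)" for y
  have gq: "g y = q x" if "M *v x = pR y" for x y
    unfolding g_def by (rule qeq) (metis (mono_tags, lifting) someI_ex ex that)
  have Mg: "M *v g y = pR y" for y
    using gq ex Mq by metis
  have gM: "g (M *v x) = q x" for x
    using gq pR(3) by auto
  have glin: "linear g"
  proof (rule linearI)
    fix y z
    obtain a where a: "M *v a = pR y" using ex by blast
    obtain b where b: "M *v b = pR z" using ex by blast
    have "M *v (a + b) = pR (y + z)" using a b linear_add[OF pR(1)]
      by (simp add: matrix_vector_right_distrib)
    then show "g (y + z) = g y + g z" using gq a b linear_add[OF qlin] by metis
  next
    fix c :: real and y
    obtain a where a: "M *v a = pR y" using ex by blast
    have "M *v (c *\<^sub>R a) = pR (c *\<^sub>R y)" using a linear_scale[OF pR(1)]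
      by (simp add: matrix_vector_mult_scaleR)
    then show "g (c *\<^sub>R y) = c *\<^sub>R g y" using gq a linear_scale[OF qlin] by metis
  qed
  have qq: "q (q x) = q x" for x by (rule qeq) (rule Mq)
  have gfix: "q (g y) = g y" for y unfolding g_def by (rule qq)
  define X where "X = matrix g"
  have Xv: "X *v y = g y" for y
    unfolding X_def using matrix_vector_mul(2)[OF glin] by metis
  have "penrose M X"
    unfolding penrose_def
  proof (intro conjI)
    show "M ** X ** M = M"
      unfolding matrix_eq by (simp add: Xv gM Mq flip: matrix_vector_mul_assoc)
    show "X ** M ** X = X"
      unfolding matrix_eq by (simp add: Xv gM gfix flip: matrix_vector_mul_assoc)
    show "transpose (M ** X) = M ** X"
      by (rule sym_matrix) (simp flip: matrix_vector_mul_assoc add: Xv Mg pR(4))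
    show "transpose (X ** M) = X ** M"
      by (rule sym_matrix) (simp flip: matrix_vector_mul_assoc add: Xv gM q_def inner_diff_left inner_diff_right pK(4))
  qed
  then show ?thesis by blast
qed

lemma penrose_unique:
  fixes M :: "real^'n^'m"
  assumes X: "penrose M X" and Y: "penrose M Y"
  shows "X = Y"
proof -
  from X have X1: "M ** X ** M = M" and X2: "X ** M ** X = X" and X3: "transpose (M ** X) = M ** X"
    and X4: "transpose (X ** M) = X ** M" unfolding penrose_def by auto
  from Y have Y1: "M ** Y ** M = M" and Y2: "Y ** M ** Y = Y" and Y3: "transpose (M ** Y) = M ** Y"
    and Y4: "transpose (Y ** M) = Y ** M" unfolding penrose_def by auto
  have tM1: "transpose M = transpose M ** (M ** Y)"
    by (metis Y1 Y3 matrix_transpose_mul matrix_mul_assoc)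
  have tM2: "transpose M = (X ** M) ** transpose M"
    by (metis X1 X4 matrix_transpose_mul matrix_mul_assoc)
  have "X = X ** (M ** X)" using X2 by (simp add: matrix_mul_assoc)
  also have "\<dots> = X ** transpose X ** transpose M"
    by (metis X3 matrix_transpose_mul matrix_mul_assoc)
  also have "\<dots> = X ** transpose X ** transpose M ** (M ** Y)"
    by (metis tM1 matrix_mul_assoc)
  also have "\<dots> = X ** transpose (M ** X) ** M ** Y"
    by (simp add: matrix_transpose_mul matrix_mul_assoc)
  also have "\<dots> = X ** M ** Y"
    by (metis X2 X3 matrix_mul_assoc)
  finally have 1: "X = X ** M ** Y" .
  have "Y = (Y ** M) ** Y" using Y2 by (simp add: matrix_mul_assoc)
  also have "\<dots> = transpose M ** transpose Y ** Y"
    by (metis Y4 matrix_transpose_mul)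
  also have "\<dots> = X ** M ** transpose M ** transpose Y ** Y"
    by (metis tM2 matrix_mul_assoc)
  also have "\<dots> = X ** M ** transpose (Y ** M) ** Y"
    by (simp add: matrix_transpose_mul matrix_mul_assoc)
  also have "\<dots> = X ** M ** Y"
    by (metis Y2 Y4 matrix_mul_assoc)
  finally show ?thesis using 1 by simp
qed

lemma pinv_penrose: "penrose M (pinv M)"
proof -
  obtain X where "penrose M X" using penrose_exists by blast
  then have "penrose M (THE X. penrose M X)"
    using theI[of "penrose M" X] penrose_unique by blast
  then show ?thesis unfolding pinv_def penrose_def[abs_def] .
qed

lemma frob_rows: "frob_norm M = sqrt (\<Sum>i\<in>UNIV. (norm (M $ i))^2)"
  unfolding frob_norm_def power2_norm_eq_inner inner_vec_def by (simp add: power2_eq_square)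

lemma row_mul:
  fixes Y :: "real^'n^'p" and P :: "real^'n^'n"
  assumes "transpose P = P"
  shows "(Y ** P) $ i = P *v (Y $ i)"
proof -
  have "(Y ** P) $ i = (Y $ i) v* P"
    by (simp add: vec_eq_iff matrix_matrix_mult_def vector_matrix_mult_def)
  also have "\<dots> = (Y $ i) v* transpose P" using assms by simp
  also have "\<dots> = P *v (Y $ i)" by (rule vector_transpose_matrix)
  finally show ?thesis .
qed

lemma proj_norm:
  fixes P :: "real^'n^'n"
  assumes T: "transpose P = P" and I: "P ** P = P"
  shows "norm (P *v v) \<le> norm v"
proof -
  have sa: "inner (P *v x) y = inner x (P *v y)" for x y
    by (metis dot_lmul_matrix vector_transpose_matrix T)
  have "inner (P *v v) (v - P *v v) = inner v (P *v v - (P ** P) *v v)"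
    by (simp add: sa matrix_vector_mult_diff_distrib matrix_vector_mul_assoc)
  also have "\<dots> = 0" using I by simp
  finally have "orthogonal (P *v v) (v - P *v v)" by (simp add: orthogonal_def)
  then have "(norm (P *v v + (v - P *v v)))^2 = (norm (P *v v))^2 + (norm (v - P *v v))^2"
    by (rule norm_add_Pythagorean)
  then have "(norm (P *v v))^2 \<le> (norm v)^2" by simp
  then show ?thesis by (rule power2_le_imp_le) simp
qed

lemma frob_proj:
  fixes Y :: "real^'n^'p" and P :: "real^'n^'n"
  assumes T: "transpose P = P" and I: "P ** P = P"
  shows "frob_norm (Y ** P) \<le> frob_norm Y"
  unfolding frob_rows row_mul[OF T]
  by (intro real_sqrt_le_mono sum_mono power_mono proj_norm[OF T I]) simp

lemma sum_UNIV_Plus: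
  "(\<Sum>s\<in>(UNIV::('a::finite+'b::finite) set). f s) = (\<Sum>a\<in>UNIV. f (Inl a)) + (\<Sum>b\<in>UNIV. f (Inr b))"
  using sum.Plus[OF finite finite, of f UNIV UNIV] by (simp add: comp_def)

theorem mainTheorem7:
  fixes W :: "real^'n^'p" and A :: "real^'n^'m" and C :: "real^'n^'k"
  assumes "W = W ** pinv A ** A"
  shows "frob_norm (W ** pinv (stack A C)) \<le> frob_norm (W ** pinv A)"
proof -
  define M where "M = stack A C"
  define X where "X = pinv M"
  have pen: "penrose M X" unfolding X_def by (rule pinv_penrose)
  define Y :: "real^('m+'k)^'p" where
    "Y = (\<chi> i s. case s of Inl a \<Rightarrow> (W ** pinv A) $ i $ a | Inr _ \<Rightarrow> 0)"
  have "Y ** M = W ** pinv A ** A"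
    by (simp add: vec_eq_iff matrix_matrix_mult_def sum_UNIV_Plus Y_def M_def stack_def)
  then have YM: "Y ** M = W" using assms by simp
  define P where "P = M ** X"
  have PT: "transpose P = P" using pen unfolding penrose_def P_def by simp
  have PI: "P ** P = P" using pen unfolding penrose_def P_def by (metis matrix_mul_assoc)
  have "W ** X = Y ** P" unfolding P_def by (simp add: YM[symmetric] matrix_mul_assoc)
  then have "frob_norm (W ** X) \<le> frob_norm Y" using frob_proj[OF PT PI] by simp
  also have "frob_norm Y = frob_norm (W ** pinv A)"
    unfolding frob_norm_def by (simp add: sum_UNIV_Plus Y_def)
  finally show ?thesis unfolding X_def M_def .
qed

end
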